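(* Let $D\subset\mathbb{R}^2$ be the open unit disk centered at the origin. There is no constant $C$ such that for every $f\in L^1(D)$ there exists ${\bf u}\in W^{1,1}_0(D)^2$ with $\operatorname{div}{\bf u}=f-\bar f$ in $D$ and $\|{\bf u}\|_{W^{1,1}(D)}\le C\|f\|_{L^1(D)}$, where $\bar f=\frac{1}{|D|}\int_D f$.
   Context: $W^{1,1}(D)$ denotes the Sobolev space of $L^1(D)$ functions with first weak derivatives in $L^1(D)$, and $W^{1,1}_0(D)$ its subspace of functions vanishing on $\partial D$ (closure of $C_0^\infty(D)$). *)

theory Defs
  imports "HOL-Analysis.Analysis"
begin

definition unit_disk :: "(real^2) set" where
  "unit_disk = ball 0 1"

definition pd :: "2 \<Rightarrow> (real^2 \<Rightarrow> real) \<Rightarrow> real^2 \<Rightarrow> real" where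
  "pd i f x = deriv (\<lambda>t. f (x + t *\<^sub>R axis i 1)) 0"

fun iter_pd :: "2 list \<Rightarrow> (real^2 \<Rightarrow> real) \<Rightarrow> real^2 \<Rightarrow> real" where
  "iter_pd [] f = f"
| "iter_pd (i # is) f = pd i (iter_pd is f)"

definition smooth :: "(real^2 \<Rightarrow> real) \<Rightarrow> bool" where
  "smooth f \<longleftrightarrow> (\<forall>is. continuous_on UNIV (iter_pd is f) \<and>
     (\<forall>i x. (\<lambda>t. iter_pd is f (x + t *\<^sub>R axis i 1)) differentiable (at 0)))"

definition test_fun :: "(real^2) set \<Rightarrow> (real^2 \<Rightarrow> real) \<Rightarrow> bool" where
  "test_fun D \<phi> \<longleftrightarrow> smooth \<phi> \<and> (\<exists>K. compact K \<and> K \<subseteq> D \<and> (\<forall>x. x \<notin> K \<longrightarrow> \<phi> x = 0))"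

definition weak_pd :: "(real^2) set \<Rightarrow> (real^2 \<Rightarrow> real) \<Rightarrow> 2 \<Rightarrow> (real^2 \<Rightarrow> real) \<Rightarrow> bool" where
  "weak_pd D u i g \<longleftrightarrow> (\<forall>\<phi>. test_fun D \<phi> \<longrightarrow>
     (LINT x:D|lborel. u x * pd i \<phi> x) = - (LINT x:D|lborel. g x * \<phi> x))"

definition W11 :: "(real^2) set \<Rightarrow> (real^2 \<Rightarrow> real) \<Rightarrow> bool" where
  "W11 D u \<longleftrightarrow> set_integrable lborel D u \<and>
     (\<forall>i. \<exists>g. set_integrable lborel D g \<and> weak_pd D u i g)"

text \<open>The (a.e. unique) weak partial derivative in L^1(D).\<close>
definition wpd :: "(real^2) set \<Rightarrow> (real^2 \<Rightarrow> real) \<Rightarrow> 2 \<Rightarrow> real^2 \<Rightarrow> real" where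
  "wpd D u i = (SOME g. set_integrable lborel D g \<and> weak_pd D u i g)"

definition L1_norm :: "(real^2) set \<Rightarrow> (real^2 \<Rightarrow> real) \<Rightarrow> real" where
  "L1_norm D f = (LINT x:D|lborel. \<bar>f x\<bar>)"

definition W11_norm :: "(real^2) set \<Rightarrow> (real^2 \<Rightarrow> real) \<Rightarrow> real" where
  "W11_norm D u = L1_norm D u + (\<Sum>i\<in>UNIV. L1_norm D (wpd D u i))"

definition W11_0 :: "(real^2) set \<Rightarrow> (real^2 \<Rightarrow> real) \<Rightarrow> bool" where
  "W11_0 D u \<longleftrightarrow> W11 D u \<and> (\<exists>\<phi>. (\<forall>n. test_fun D (\<phi> n)) \<and>
      (\<lambda>n. W11_norm D (\<lambda>x. \<phi> n x - u x)) \<longlonglongrightarrow> 0)"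

definition mean_value :: "(real^2) set \<Rightarrow> (real^2 \<Rightarrow> real) \<Rightarrow> real" where
  "mean_value D f = (LINT x:D|lborel. f x) / measure lborel D"

end

theory Submission
  imports Defs "HOL-Computational_Algebra.Polynomial"
begin


lemma poly_exp_at_top: "((\<lambda>s. poly R s / exp s) \<longlongrightarrow> (0::real)) at_top"
proof -
  have "((\<lambda>s. \<Sum>i\<le>degree R. coeff R i * (s ^ i / exp s)) \<longlongrightarrow> (\<Sum>i\<le>degree R. coeff R i * 0)) at_top"
    by (intro tendsto_sum tendsto_mult tendsto_const tendsto_power_div_exp_0)
  then show ?thesis by (simp add: poly_altdef sum_divide_distrib)
qed

lemma poly_exp_at_right: "((\<lambda>t. poly R (1/t) * exp (-1/t)) \<longlongrightarrow> (0::real)) (at_right 0)"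
proof -
  have "((\<lambda>t. poly R (inverse t) / exp (inverse t)) \<longlongrightarrow> (0::real)) (at_right 0)"
    using filterlim_compose[OF poly_exp_at_top filterlim_inverse_at_top_right] by (simp add: o_def)
  moreover have "poly R (inverse t) / exp (inverse t) = poly R (1/t) * exp (-1/t)" for t
    by (simp add: exp_minus divide_inverse)
  ultimately show ?thesis by simp
qed



definition hP :: "real poly \<Rightarrow> real \<Rightarrow> real" where
  "hP P t = (if t > 0 then poly P (1/t) * exp (-1/t) else 0)"

definition hQ :: "real poly \<Rightarrow> real poly" where
  "hQ P = monom 1 2 * (P - pderiv P)"

lemma hP_deriv_pos:
  assumes "x > 0"
  shows "(hP P has_real_derivative hP (hQ P) x) (at x)"
proof -
  have d: "((\<lambda>t. poly P (1/t) * exp (-1/t)) has_real_derivative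
       (poly (pderiv P) (1/x) * (- 1/x^2)) * exp (-1/x) + poly P (1/x) * (exp (-1/x) * (1/x^2))) (at x)"
    using assms
    by (auto intro!: derivative_eq_intros DERIV_chain2[OF poly_DERIV] simp: power2_eq_square field_simps)
  have e: "(poly (pderiv P) (1/x) * (- 1/x^2)) * exp (-1/x) + poly P (1/x) * (exp (-1/x) * (1/x^2))
       = hP (hQ P) x"
    using assms by (simp add: hP_def hQ_def poly_monom algebra_simps power2_eq_square)
  show ?thesis
    apply (rule has_field_derivative_transform_within_open[where S="{0<..}"])
    using d e assms by (auto simp: hP_def)
qed

lemma hP_deriv_neg:
  assumes "x < 0"
  shows "(hP P has_real_derivative hP (hQ P) x) (at x)"
proof -
  have z: "hP (hQ P) x = 0" using assms by (simp add: hP_def)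
  have "((\<lambda>t. 0) has_real_derivative 0) (at x)" by simp
  then show ?thesis unfolding z
    apply (rule has_field_derivative_transform_within_open[where S="{..<0}"])
    using assms by (auto simp: hP_def)
qed

lemma hP_deriv_0:
  shows "(hP P has_real_derivative hP (hQ P) 0) (at 0)"
proof -
  have "((\<lambda>y. (hP P y - hP P 0) / (y - 0)) \<longlongrightarrow> 0) (at (0::real))"
  proof (rule filterlim_split_at_real)
    show "((\<lambda>y. (hP P y - hP P 0) / (y - 0)) \<longlongrightarrow> 0) (at_left (0::real))"
    proof (rule tendsto_eventually)
      have "\<forall>\<^sub>F y in at_left (0::real). y < 0" by (simp add: eventually_at_filter)
      then show "\<forall>\<^sub>F y in at_left (0::real). (hP P y - hP P 0) / (y - 0) = 0"
        by eventually_elim (simp add: hP_def)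
    qed
    have "((\<lambda>t. poly (pCons 0 P) (1/t) * exp (-1/t)) \<longlongrightarrow> (0::real)) (at_right 0)"
      by (rule poly_exp_at_right)
    moreover have "\<forall>\<^sub>F y in at_right (0::real). y > 0" by (simp add: eventually_at_filter)
    then have "\<forall>\<^sub>F y in at_right 0. poly (pCons 0 P) (1/y) * exp (-1/y) = (hP P y - hP P 0) / (y - 0)"
      by eventually_elim (simp add: hP_def)
    ultimately show "((\<lambda>y. (hP P y - hP P 0) / (y - 0)) \<longlongrightarrow> 0) (at_right (0::real))"
      by (rule Lim_transform_eventually)
  qed
  then show ?thesis by (simp add: has_field_derivative_iff hP_def)
qed

lemma hP_deriv: "(hP P has_real_derivative hP (hQ P) x) (at x)"
  using hP_deriv_0 hP_deriv_pos hP_deriv_neg by (cases x "0::real" rule: linorder_cases) auto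


fun Cn :: "nat \<Rightarrow> (real \<Rightarrow> real) \<Rightarrow> bool" where
  "Cn 0 f = True"
| "Cn (Suc n) f = ((\<forall>x. f differentiable (at x)) \<and> Cn n (deriv f))"

lemma deriv_ext: "(\<And>x. (f has_real_derivative g x) (at x)) \<Longrightarrow> deriv f = g"
  by (rule ext) (rule DERIV_imp_deriv)

lemma Cn_SucI: "(\<And>x. (f has_real_derivative g x) (at x)) \<Longrightarrow> Cn n g \<Longrightarrow> Cn (Suc n) f"
  using deriv_ext[of f g] by (auto simp: real_differentiable_def)

lemma Cn_SucE:
  assumes "Cn (Suc n) f"
  obtains g where "\<And>x. (f has_real_derivative g x) (at x)" "Cn n g"
  using assms DERIV_deriv_iff_real_differentiable by auto

lemma Cn_mono: "Cn (Suc n) f \<Longrightarrow> Cn n f"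
proof (induction n arbitrary: f)
  case 0 then show ?case by simp
next
  case (Suc n)
  then show ?case by auto
qed

lemma Cn_const: "Cn n (\<lambda>x. c)"
proof (induction n arbitrary: c)
  case 0 then show ?case by simp
next
  case (Suc n) show ?case by (rule Cn_SucI[where g="\<lambda>x. 0"]) (auto intro: Suc)
qed

lemma Cn_add: "Cn n f \<Longrightarrow> Cn n g \<Longrightarrow> Cn n (\<lambda>x. f x + g x)"
proof (induction n arbitrary: f g)
  case 0 then show ?case by simp
next
  case (Suc n)
  obtain f' where f': "\<And>x. (f has_real_derivative f' x) (at x)" "Cn n f'" using Cn_SucE[OF Suc.prems(1)] by blast
  obtain g' where g': "\<And>x. (g has_real_derivative g' x) (at x)" "Cn n g'" using Cn_SucE[OF Suc.prems(2)] by blast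
  show ?case
    by (rule Cn_SucI[where g="\<lambda>x. f' x + g' x"]) (auto intro!: derivative_eq_intros f' g' Suc.IH)
qed

lemma Cn_mult: "Cn n f \<Longrightarrow> Cn n g \<Longrightarrow> Cn n (\<lambda>x. f x * g x)"
proof (induction n arbitrary: f g)
  case 0 then show ?case by simp
next
  case (Suc n)
  obtain f' where f': "\<And>x. (f has_real_derivative f' x) (at x)" "Cn n f'" using Cn_SucE[OF Suc.prems(1)] by blast
  obtain g' where g': "\<And>x. (g has_real_derivative g' x) (at x)" "Cn n g'" using Cn_SucE[OF Suc.prems(2)] by blast
  have f0: "Cn n f" "Cn n g" using Suc.prems Cn_mono by auto
  show ?case
    by (rule Cn_SucI[where g="\<lambda>x. f' x * g x + f x * g' x"])
       (auto intro!: derivative_eq_intros f' g' Suc.IH Cn_add f0)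
qed

lemma Cn_id: "Cn n (\<lambda>x. x)"
proof (cases n)
  case 0 then show ?thesis by simp
next
  case (Suc m) show ?thesis unfolding Suc by (rule Cn_SucI[where g="\<lambda>x. 1"]) (auto intro: Cn_const)
qed

lemma Cn_affine: "Cn n f \<Longrightarrow> Cn n (\<lambda>x. f (c * x + d))"
proof (induction n arbitrary: f)
  case 0 then show ?case by simp
next
  case (Suc n)
  obtain f' where f': "\<And>x. (f has_real_derivative f' x) (at x)" "Cn n f'" using Cn_SucE[OF Suc.prems(1)] by blast
  show ?case
    apply (rule Cn_SucI[where g="\<lambda>x. c * f' (c * x + d)"])
    subgoal for x
    proof -
      have l: "((\<lambda>x. c * x + d) has_real_derivative c) (at x)"
        by (auto intro!: derivative_eq_intros)
      show ?thesis using DERIV_chain2[OF f'(1) l] by (simp add: mult.commute)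
    qed
    by (intro Cn_mult Cn_const Suc.IH f')
qed

lemma Cn_hP: "Cn n (hP P)"
proof (induction n arbitrary: P)
  case 0 then show ?case by simp
next
  case (Suc n) show ?case by (rule Cn_SucI[OF hP_deriv Suc.IH])
qed

definition sm1 :: "(real \<Rightarrow> real) \<Rightarrow> bool" where "sm1 f \<longleftrightarrow> (\<forall>n. Cn n f)"

lemma sm1_add: "sm1 f \<Longrightarrow> sm1 g \<Longrightarrow> sm1 (\<lambda>x. f x + g x)" by (simp add: sm1_def Cn_add)
lemma sm1_mult: "sm1 f \<Longrightarrow> sm1 g \<Longrightarrow> sm1 (\<lambda>x. f x * g x)" by (simp add: sm1_def Cn_mult)
lemma sm1_const: "sm1 (\<lambda>x. c)" by (simp add: sm1_def Cn_const)
lemma sm1_id: "sm1 (\<lambda>x. x)" by (simp add: sm1_def Cn_id)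
lemma sm1_affine: "sm1 f \<Longrightarrow> sm1 (\<lambda>x. f (c * x + d))" by (simp add: sm1_def Cn_affine)
lemma sm1_hP: "sm1 (hP P)" by (simp add: sm1_def Cn_hP)
lemma sm1_deriv: "sm1 f \<Longrightarrow> sm1 (deriv f)" by (metis Cn.simps(2) sm1_def)
lemma sm1_DERIV: "sm1 f \<Longrightarrow> (f has_real_derivative deriv f x) (at x)"
  by (metis Cn.simps(2) sm1_def DERIV_deriv_iff_real_differentiable)
lemma sm1_cont: "sm1 f \<Longrightarrow> continuous_on UNIV f"
  by (meson DERIV_isCont continuous_at_imp_continuous_on sm1_DERIV)


lemma deriv_zero_open:
  assumes "open S" "x \<in> S" "\<And>y. y \<in> S \<Longrightarrow> f y = (0::real)"
  shows "deriv f x = 0"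
proof -
  have "((\<lambda>y. 0) has_real_derivative 0) (at x)" by simp
  then have "(f has_real_derivative 0) (at x)"
    by (rule has_field_derivative_transform_within_open[OF _ assms(1,2)]) (simp add: assms(3))
  then show ?thesis by (rule DERIV_imp_deriv)
qed

lemma bounded_compact_support:
  fixes g :: "'a::{real_normed_vector,heine_borel} \<Rightarrow> real"
  assumes "continuous_on UNIV g" "\<And>x. norm x > R \<Longrightarrow> g x = 0"
  shows "\<exists>M. \<forall>x. \<bar>g x\<bar> \<le> M"
proof -
  have "compact (g ` cball 0 R)"
    by (rule compact_continuous_image) (auto intro: continuous_on_subset[OF assms(1)])
  then obtain M where M: "\<And>y. y \<in> g ` cball 0 R \<Longrightarrow> norm y \<le> M"
    using compact_imp_bounded bounded_iff by metis
  have "\<bar>g x\<bar> \<le> max M 0" for x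
  proof (cases "norm x > R")
    case True then show ?thesis using assms(2) by simp
  next
    case False then have "x \<in> cball 0 R" by simp
    then show ?thesis using M[of "g x"] by force
  qed
  then show ?thesis by blast
qed

definition hh :: "real \<Rightarrow> real" where "hh = hP 1"
definition bet :: "real \<Rightarrow> real" where "bet t = hh (1/2 + t) * hh (1/2 - t)"
definition BB :: "real \<Rightarrow> real" where "BB t = t * bet t"
definition aa :: "real \<Rightarrow> real" where "aa = deriv BB"
definition ad :: "real \<Rightarrow> real" where "ad = deriv aa"

lemma hh_pos: "t > 0 \<Longrightarrow> hh t > 0" by (simp add: hh_def hP_def)
lemma hh_zero: "t \<le> 0 \<Longrightarrow> hh t = 0" by (simp add: hh_def hP_def)

lemma sm1_hh: "sm1 hh" by (simp add: hh_def sm1_hP)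
lemma sm1_bet: "sm1 bet"
  unfolding bet_def
  using sm1_mult[OF sm1_affine[OF sm1_hh, of 1 "1/2"] sm1_affine[OF sm1_hh, of "-1" "1/2"]]
  by (simp add: add.commute)
lemma sm1_BB: "sm1 BB" unfolding BB_def by (intro sm1_mult sm1_id sm1_bet)
lemma sm1_aa: "sm1 aa" unfolding aa_def by (intro sm1_deriv sm1_BB)
lemma sm1_ad: "sm1 ad" unfolding ad_def by (intro sm1_deriv sm1_aa)
lemma BB_DERIV: "(BB has_real_derivative aa t) (at t)" unfolding aa_def by (rule sm1_DERIV[OF sm1_BB])
lemma aa_DERIV: "(aa has_real_derivative ad t) (at t)" unfolding ad_def by (rule sm1_DERIV[OF sm1_aa])

lemma bet_zero: "\<bar>t\<bar> \<ge> 1/2 \<Longrightarrow> bet t = 0"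
  by (auto simp: bet_def hh_zero abs_if split: if_splits)
lemma BB_zero: "\<bar>t\<bar> \<ge> 1/2 \<Longrightarrow> BB t = 0"
  by (simp add: BB_def bet_zero)
lemma open_abs_gt: "open {y::real. c < \<bar>y\<bar>}"
  by (intro open_Collect_less continuous_intros)

lemma aa_zero: "\<bar>t\<bar> > 1/2 \<Longrightarrow> aa t = 0"
  unfolding aa_def by (rule deriv_zero_open[OF open_abs_gt[of "1/2"]]) (auto intro: BB_zero)
lemma ad_zero: "\<bar>t\<bar> > 1/2 \<Longrightarrow> ad t = 0"
  unfolding ad_def by (rule deriv_zero_open[OF open_abs_gt[of "1/2"]]) (auto intro: aa_zero)

lemma aa_formula: "aa = (\<lambda>t. bet t + t * deriv bet t)"
  unfolding aa_def
  unfolding BB_def[abs_def]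
  by (rule deriv_ext) (auto intro!: derivative_eq_intros sm1_DERIV[OF sm1_bet])

lemma aa0: "aa 0 > 0"
  using hh_pos[of "1/2"] by (simp add: aa_formula bet_def)

lemma bet_deriv0: "deriv bet 0 = 0"
proof -
  have "(bet has_real_derivative (deriv hh (1/2) * hh (1/2) - hh (1/2) * deriv hh (1/2))) (at 0)"
    unfolding bet_def[abs_def]
    by (auto intro!: derivative_eq_intros DERIV_chain2[OF sm1_DERIV[OF sm1_hh]])
  then show ?thesis by (simp add: DERIV_imp_deriv)
qed

lemma ad0: "ad 0 = 0"
proof -
  have "(aa has_real_derivative (deriv bet 0 + (1 * deriv bet 0 + 0 * deriv (deriv bet) 0))) (at 0)"
    unfolding aa_formula
    by (auto intro!: derivative_eq_intros sm1_DERIV[OF sm1_bet] sm1_DERIV[OF sm1_deriv[OF sm1_bet]])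
  then show ?thesis unfolding ad_def by (simp add: DERIV_imp_deriv bet_deriv0)
qed


lemma lipschitz_from_deriv:
  assumes "\<And>x. (f has_real_derivative f' x) (at x)" "\<And>x. \<bar>f' x\<bar> \<le> L"
  shows "\<bar>f y - f x\<bar> \<le> L * \<bar>y - x\<bar>"
proof -
  have *: "\<bar>f b - f a\<bar> \<le> L * \<bar>b - a\<bar>" if ab: "a < b" for a b
  proof -
    have "\<exists>z>a. z < b \<and> f b - f a = (b - a) * f' z" by (rule MVT2[OF ab]) (rule assms(1))
    then obtain z where z: "f b - f a = (b - a) * f' z" by blast
    have "\<bar>f b - f a\<bar> = \<bar>b - a\<bar> * \<bar>f' z\<bar>" unfolding z by (simp add: abs_mult)
    also have "\<dots> \<le> \<bar>b - a\<bar> * L" by (rule mult_left_mono[OF assms(2)]) simp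
    finally show ?thesis by (simp add: mult.commute)
  qed
  show ?thesis
  proof (cases x y rule: linorder_cases)
    case less then show ?thesis using * by blast
  next
    case equal then show ?thesis by simp
  next
    case greater then show ?thesis using *[OF greater] by (simp add: abs_minus_commute)
  qed
qed

lemma ad_lip: "\<exists>L. \<forall>t. \<bar>ad t\<bar> \<le> L * \<bar>t\<bar>"
proof -
  have z: "deriv ad x = 0" if "norm x > 1/2" for x
    by (rule deriv_zero_open[OF open_abs_gt[of "1/2"]]) (use that ad_zero in auto)
  obtain L where L: "\<And>x. \<bar>deriv ad x\<bar> \<le> L"
    using bounded_compact_support[OF sm1_cont[OF sm1_deriv[OF sm1_ad]] z] by blast
  have "\<bar>ad t - ad 0\<bar> \<le> L * \<bar>t - 0\<bar>" for t
    by (rule lipschitz_from_deriv[OF sm1_DERIV[OF sm1_ad] L])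
  then show ?thesis using ad0 by auto
qed

lemma BB_bound: "\<exists>M. \<forall>t. \<bar>BB t\<bar> \<le> M"
  by (rule bounded_compact_support[OF sm1_cont[OF sm1_BB], of "1/2"]) (auto intro: BB_zero)

lemma aa_near0: "\<exists>d>0. \<forall>t. \<bar>t\<bar> \<le> d \<longrightarrow> aa t \<ge> aa 0 / 2"
proof -
  have "isCont aa 0" using sm1_cont[OF sm1_aa] by (simp add: continuous_on_eq_continuous_at)
  then obtain d where d: "d > 0" "\<And>t. \<bar>t - 0\<bar> < d \<Longrightarrow> \<bar>aa t - aa 0\<bar> < aa 0 / 2"
  proof -
    have "aa 0 / 2 > 0" using aa0 by simp
    from \<open>isCont aa 0\<close>[unfolded isCont_def, THEN LIM_D, OF this]
    obtain d where "d > 0" "\<And>t. t \<noteq> 0 \<and> norm (t - 0) < d \<Longrightarrow> norm (aa t - aa 0) < aa 0 / 2" by blast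
    then show ?thesis using that \<open>aa 0 / 2 > 0\<close> by (metis diff_self real_norm_def norm_zero)
  qed
  show ?thesis
  proof (intro exI[of _ "d/2"] conjI allI impI)
    fix t :: real assume "\<bar>t\<bar> \<le> d/2"
    then have "\<bar>t - 0\<bar> < d" using d(1) by simp
    from d(2)[OF this] show "aa t \<ge> aa 0 / 2" by linarith
  qed (use d in simp)
qed


definition sep :: "nat \<Rightarrow> (nat \<Rightarrow> real \<Rightarrow> real) \<Rightarrow> (nat \<Rightarrow> real \<Rightarrow> real) \<Rightarrow> real^2 \<Rightarrow> real" where
  "sep N p q v = (\<Sum>k<N. p k (v$1) * q k (v$2))"

lemma two_ne: "(1::2) \<noteq> 2" by simp

lemma line_comp1:
  fixes x :: "real^2"
  shows "(x + t *\<^sub>R axis 1 1) $ 1 = x $ 1 + t" "(x + t *\<^sub>R axis 1 1) $ 2 = x $ 2"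
  "(x + t *\<^sub>R axis 2 1) $ 1 = x $ 1" "(x + t *\<^sub>R axis 2 1) $ 2 = x $ 2 + t"
  using two_ne by (simp_all add: axis_def)

lemma sep_line1:
  assumes "\<And>k x. (p k has_real_derivative p' k x) (at x)"
  shows "((\<lambda>t. sep N p q (x + t *\<^sub>R axis 1 1)) has_real_derivative sep N p' q x) (at 0)"
proof -
  have "((\<lambda>t. \<Sum>k<N. p k (x$1 + t) * q k (x$2)) has_real_derivative (\<Sum>k<N. p' k (x$1) * q k (x$2))) (at 0)"
  proof (rule DERIV_sum)
    fix k
    have l: "((\<lambda>t. x$1 + t) has_real_derivative 1) (at 0)" by (auto intro!: derivative_eq_intros)
    have "((\<lambda>t. p k (x$1 + t)) has_real_derivative p' k (x$1 + 0) * 1) (at 0)"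
      by (rule DERIV_chain2[OF assms l])
    then show "((\<lambda>t. p k (x$1 + t) * q k (x$2)) has_real_derivative p' k (x$1) * q k (x$2)) (at 0)"
      by (auto intro!: derivative_eq_intros)
  qed
  then show ?thesis using two_ne by (simp add: sep_def axis_def)
qed

lemma sep_line2:
  assumes "\<And>k x. (q k has_real_derivative q' k x) (at x)"
  shows "((\<lambda>t. sep N p q (x + t *\<^sub>R axis 2 1)) has_real_derivative sep N p q' x) (at 0)"
proof -
  have "((\<lambda>t. \<Sum>k<N. p k (x$1) * q k (x$2 + t)) has_real_derivative (\<Sum>k<N. p k (x$1) * q' k (x$2))) (at 0)"
  proof (rule DERIV_sum)
    fix k
    have l: "((\<lambda>t. x$2 + t) has_real_derivative 1) (at 0)" by (auto intro!: derivative_eq_intros)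
    have "((\<lambda>t. q k (x$2 + t)) has_real_derivative q' k (x$2 + 0) * 1) (at 0)"
      by (rule DERIV_chain2[OF assms l])
    then show "((\<lambda>t. p k (x$1) * q k (x$2 + t)) has_real_derivative p k (x$1) * q' k (x$2)) (at 0)"
      by (auto intro!: derivative_eq_intros)
  qed
  then show ?thesis using two_ne by (simp add: sep_def axis_def)
qed

lemma pd_sep1:
  assumes "\<And>k x. (p k has_real_derivative p' k x) (at x)"
  shows "pd 1 (sep N p q) = sep N p' q"
  by (rule ext) (simp add: pd_def DERIV_imp_deriv[OF sep_line1[OF assms]])

lemma pd_sep2:
  assumes "\<And>k x. (q k has_real_derivative q' k x) (at x)"
  shows "pd 2 (sep N p q) = sep N p q'"
  by (rule ext) (simp add: pd_def DERIV_imp_deriv[OF sep_line2[OF assms]])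

lemma iter_sep:
  assumes "\<And>k. sm1 (p k)" "\<And>k. sm1 (q k)"
  shows "\<exists>p' q'. (\<forall>k. sm1 (p' k)) \<and> (\<forall>k. sm1 (q' k)) \<and> iter_pd js (sep N p q) = sep N p' q'"
proof (induction js)
  case Nil then show ?case using assms by auto
next
  case (Cons i "is")
  then obtain p' q' where pq: "\<And>k. sm1 (p' k)" "\<And>k. sm1 (q' k)" "iter_pd is (sep N p q) = sep N p' q'"
    by blast
  show ?case
  proof (cases "i = 1")
    case True
    have "pd 1 (sep N p' q') = sep N (\<lambda>k. deriv (p' k)) q'"
      by (rule pd_sep1) (rule sm1_DERIV[OF pq(1)])
    then show ?thesis using True pq
      apply -
      apply (rule exI[of _ "\<lambda>k. deriv (p' k)"])
      apply (rule exI[of _ q'])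
      by (auto intro: sm1_deriv)
  next
    case False then have "i = 2" using exhaust_2 by blast
    have "pd 2 (sep N p' q') = sep N p' (\<lambda>k. deriv (q' k))"
      by (rule pd_sep2) (rule sm1_DERIV[OF pq(2)])
    then show ?thesis using \<open>i = 2\<close> pq
      apply -
      apply (rule exI[of _ p'])
      apply (rule exI[of _ "\<lambda>k. deriv (q' k)"])
      by (auto intro: sm1_deriv)
  qed
qed

lemma cont_sep:
  assumes "\<And>k. sm1 (p k)" "\<And>k. sm1 (q k)"
  shows "continuous_on UNIV (sep N p q)"
proof -
  have c: "continuous_on UNIV (\<lambda>v::real^2. v $ i)" for i
    by (intro continuous_intros)
  have "continuous_on UNIV (p k \<circ> (\<lambda>v::real^2. v $ 1))" "continuous_on UNIV (q k \<circ> (\<lambda>v::real^2. v $ 2))" for k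
    by (auto simp: o_def intro!: continuous_on_compose2[OF sm1_cont[OF assms(1)] c]
          continuous_on_compose2[OF sm1_cont[OF assms(2)] c])
  then show ?thesis unfolding sep_def[abs_def] by (auto intro!: continuous_intros simp: o_def)
qed

lemma smooth_sep:
  assumes "\<And>k. sm1 (p k)" "\<And>k. sm1 (q k)"
  shows "smooth (sep N p q)"
  unfolding smooth_def
proof (intro allI conjI)
  fix "is" :: "2 list" and i :: 2 and x :: "real^2"
  obtain p' q' where pq: "\<And>k. sm1 (p' k)" "\<And>k. sm1 (q' k)" "iter_pd is (sep N p q) = sep N p' q'"
    using iter_sep[where p=p and q=q and N=N and js="is"] assms by blast
  show "continuous_on UNIV (iter_pd is (sep N p q))" unfolding pq(3) by (rule cont_sep[OF pq(1,2)])
  show "(\<lambda>t. iter_pd is (sep N p q) (x + t *\<^sub>R axis i 1)) differentiable at 0"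
    unfolding pq(3)
  proof (cases "i = 1")
    case True then show "(\<lambda>t. sep N p' q' (x + t *\<^sub>R axis i 1)) differentiable at 0"
    proof -
      have d: "\<And>k x. (p' k has_real_derivative deriv (p' k) x) (at x)" using sm1_DERIV pq(1) by blast
      show ?thesis using sep_line1[where p=p' and p'="\<lambda>k. deriv (p' k)", OF d] True by (auto simp: real_differentiable_def)
    qed
  next
    case False then have "i = 2" using exhaust_2 by blast
    then show "(\<lambda>t. sep N p' q' (x + t *\<^sub>R axis i 1)) differentiable at 0"
    proof -
      have d: "\<And>k x. (q' k has_real_derivative deriv (q' k) x) (at x)" using sm1_DERIV pq(2) by blast
      show ?thesis using sep_line2[where q=q' and q'="\<lambda>k. deriv (q' k)", OF d] \<open>i = 2\<close> by (auto simp: real_differentiable_def)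
    qed
  qed
qed

lemma test_fun_cont: "test_fun D \<phi> \<Longrightarrow> continuous_on UNIV \<phi>"
  unfolding test_fun_def smooth_def by (metis iter_pd.simps(1))

lemma test_fun_bdd: "test_fun D \<phi> \<Longrightarrow> \<exists>B. \<forall>x. \<bar>\<phi> x\<bar> \<le> B"
proof -
  assume t: "test_fun D \<phi>"
  then obtain K where K: "compact K" "\<And>x. x \<notin> K \<Longrightarrow> \<phi> x = 0" unfolding test_fun_def by blast
  obtain R c where R: "K \<subseteq> cball c R" using compact_imp_bounded[OF K(1)] bounded_subset_cball by blast
  have "\<phi> x = 0" if "norm x > R + norm c" for x
  proof -
    have "dist c x > R" using that norm_triangle_ineq2[of x c] by (simp add: dist_norm norm_minus_commute)
    then have "x \<notin> cball c R" by simp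
    then have "x \<notin> K" using R by blast
    then show ?thesis using K(2) by blast
  qed
  then show ?thesis using bounded_compact_support[OF test_fun_cont[OF t]] by blast
qed

lemma wpd_props:
  assumes "W11 D u"
  shows "set_integrable lborel D (wpd D u i)" "weak_pd D u i (wpd D u i)"
proof -
  have "\<exists>g. set_integrable lborel D g \<and> weak_pd D u i g" using assms unfolding W11_def by blast
  from someI_ex[OF this] show "set_integrable lborel D (wpd D u i)" "weak_pd D u i (wpd D u i)"
    unfolding wpd_def by auto
qed

lemma set_int_mult_bdd:
  fixes g \<phi> :: "real^2 \<Rightarrow> real"
  assumes g: "set_integrable lborel D g" and c: "continuous_on UNIV \<phi>" and B: "\<And>x. \<bar>\<phi> x\<bar> \<le> B"
  shows "set_integrable lborel D (\<lambda>x. g x * \<phi> x)"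
  unfolding set_integrable_def
proof (rule Bochner_Integration.integrable_bound)
  show "integrable lborel (\<lambda>x. B * (indicator D x *\<^sub>R g x))"
    using g unfolding set_integrable_def by simp
  have m1: "(\<lambda>x. indicator D x *\<^sub>R g x) \<in> borel_measurable lborel"
    using g unfolding set_integrable_def by auto
  have m2: "\<phi> \<in> borel_measurable lborel"
    using borel_measurable_continuous_onI[OF c] by simp
  have "(\<lambda>x. (indicator D x *\<^sub>R g x) * \<phi> x) \<in> borel_measurable lborel"
    using m1 m2 by measurable
  then show "(\<lambda>x. indicator D x *\<^sub>R (g x * \<phi> x)) \<in> borel_measurable lborel"
    by (simp add: mult.assoc)
  have "B \<ge> 0" using B[of 0] by simp
  show "AE x in lborel. norm (indicator D x *\<^sub>R (g x * \<phi> x)) \<le> norm (B * (indicator D x *\<^sub>R g x))"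
  proof (rule AE_I2)
    fix x
    have "\<bar>indicator D x * g x\<bar> * \<bar>\<phi> x\<bar> \<le> \<bar>indicator D x * g x\<bar> * B"
      by (rule mult_left_mono[OF B]) simp
    then show "norm (indicator D x *\<^sub>R (g x * \<phi> x)) \<le> norm (B * (indicator D x *\<^sub>R g x))"
      using \<open>B \<ge> 0\<close> by (simp add: abs_mult mult_ac)
  qed
qed

lemma set_integrable_abs':
  fixes g :: "'a \<Rightarrow> real"
  assumes "set_integrable M D g" shows "set_integrable M D (\<lambda>x. \<bar>g x\<bar>)"
proof -
  have "(\<lambda>x. indicator D x *\<^sub>R \<bar>g x\<bar>) = (\<lambda>x. \<bar>indicator D x *\<^sub>R g x\<bar>)"
    by (auto simp: indicator_def)
  then show ?thesis using assms unfolding set_integrable_def by (simp add: integrable_abs)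
qed

lemma core:
  fixes u1 u2 \<psi> G1 G2 F :: "real^2 \<Rightarrow> real"
  assumes W1: "W11 D u1" and W2: "W11 D u2"
    and t\<psi>: "test_fun D \<psi>" and tG1: "test_fun D G1" and tG2: "test_fun D G2"
    and e1: "pd 1 \<psi> = pd 2 G1" and e2: "pd 2 \<psi> = pd 1 G2"
    and bG1: "\<And>x. \<bar>G1 x\<bar> \<le> M" and bG2: "\<And>x. \<bar>G2 x\<bar> \<le> M"
    and F: "set_integrable lborel D F"
    and AE: "AE x in lborel. x \<in> D \<longrightarrow> wpd D u1 1 x + wpd D u2 2 x = F x"
  shows "\<bar>LINT x:D|lborel. F x * \<psi> x\<bar> \<le> M * (L1_norm D (wpd D u1 2) + L1_norm D (wpd D u2 1))"
proof -
  define w11 where "w11 = wpd D u1 1"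
  define w12 where "w12 = wpd D u1 2"
  define w21 where "w21 = wpd D u2 1"
  define w22 where "w22 = wpd D u2 2"
  note wp = wpd_props[OF W1] wpd_props[OF W2]
  have i11: "set_integrable lborel D w11" and i12: "set_integrable lborel D w12"
    and i21: "set_integrable lborel D w21" and i22: "set_integrable lborel D w22"
    using wp unfolding w11_def w12_def w21_def w22_def by auto
  obtain B where B: "\<And>x. \<bar>\<psi> x\<bar> \<le> B" using test_fun_bdd[OF t\<psi>] by blast
  have c\<psi>: "continuous_on UNIV \<psi>" by (rule test_fun_cont[OF t\<psi>])
  have cG1: "continuous_on UNIV G1" by (rule test_fun_cont[OF tG1])
  have cG2: "continuous_on UNIV G2" by (rule test_fun_cont[OF tG2])
  have j11: "set_integrable lborel D (\<lambda>x. w11 x * \<psi> x)" by (rule set_int_mult_bdd[OF i11 c\<psi> B])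
  have j22: "set_integrable lborel D (\<lambda>x. w22 x * \<psi> x)" by (rule set_int_mult_bdd[OF i22 c\<psi> B])
  have jF: "set_integrable lborel D (\<lambda>x. F x * \<psi> x)" by (rule set_int_mult_bdd[OF F c\<psi> B])
  have j12: "set_integrable lborel D (\<lambda>x. w12 x * G1 x)" by (rule set_int_mult_bdd[OF i12 cG1 bG1])
  have j21: "set_integrable lborel D (\<lambda>x. w21 x * G2 x)" by (rule set_int_mult_bdd[OF i21 cG2 bG2])
  have "(LINT x:D|lborel. F x * \<psi> x) = (LINT x:D|lborel. w11 x * \<psi> x + w22 x * \<psi> x)"
    unfolding set_lebesgue_integral_def
  proof (rule integral_cong_AE)
    show "(\<lambda>x. indicator D x *\<^sub>R (F x * \<psi> x)) \<in> borel_measurable lborel"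
      using jF unfolding set_integrable_def by auto
    show "(\<lambda>x. indicator D x *\<^sub>R (w11 x * \<psi> x + w22 x * \<psi> x)) \<in> borel_measurable lborel"
      using set_integral_add(1)[OF j11 j22] unfolding set_integrable_def by auto
    show "AE x in lborel. indicator D x *\<^sub>R (F x * \<psi> x) = indicator D x *\<^sub>R (w11 x * \<psi> x + w22 x * \<psi> x)"
      using AE by eventually_elim (auto simp: w11_def w22_def indicator_def, metis distrib_left mult.commute)
  qed
  also have "\<dots> = (LINT x:D|lborel. w11 x * \<psi> x) + (LINT x:D|lborel. w22 x * \<psi> x)"
    by (rule set_integral_add(2)[OF j11 j22])
  also have "(LINT x:D|lborel. w11 x * \<psi> x) = (LINT x:D|lborel. w12 x * G1 x)"
  proof -
    have "(LINT x:D|lborel. u1 x * pd 1 \<psi> x) = - (LINT x:D|lborel. w11 x * \<psi> x)"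
      using wp(2)[of 1] t\<psi> unfolding weak_pd_def w11_def by blast
    moreover have "(LINT x:D|lborel. u1 x * pd 2 G1 x) = - (LINT x:D|lborel. w12 x * G1 x)"
      using wp(2)[of 2] tG1 unfolding weak_pd_def w12_def by blast
    ultimately show ?thesis using e1 by simp
  qed
  also have "(LINT x:D|lborel. w22 x * \<psi> x) = (LINT x:D|lborel. w21 x * G2 x)"
  proof -
    have "(LINT x:D|lborel. u2 x * pd 2 \<psi> x) = - (LINT x:D|lborel. w22 x * \<psi> x)"
      using wp(4)[of 2] t\<psi> unfolding weak_pd_def w22_def by blast
    moreover have "(LINT x:D|lborel. u2 x * pd 1 G2 x) = - (LINT x:D|lborel. w21 x * G2 x)"
      using wp(4)[of 1] tG2 unfolding weak_pd_def w21_def by blast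
    ultimately show ?thesis using e2 by simp
  qed
  finally have eq: "(LINT x:D|lborel. F x * \<psi> x) = (LINT x:D|lborel. w12 x * G1 x) + (LINT x:D|lborel. w21 x * G2 x)" .
  have bnd: "\<bar>LINT x:D|lborel. w x * G x\<bar> \<le> M * L1_norm D w"
    if iw: "set_integrable lborel D w" and jw: "set_integrable lborel D (\<lambda>x. w x * G x)"
      and bG: "\<And>x. \<bar>G x\<bar> \<le> M" for w G :: "real^2 \<Rightarrow> real"
  proof -
    have aw: "set_integrable lborel D (\<lambda>x. \<bar>w x\<bar>)"
      by (rule set_integrable_abs'[OF iw])
    have "\<bar>LINT x:D|lborel. w x * G x\<bar> \<le> (LINT x:D|lborel. norm (w x * G x))"
      using set_integral_norm_bound[OF jw] by simp
    also have "\<dots> \<le> (LINT x:D|lborel. M * \<bar>w x\<bar>)"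
    proof (rule set_integral_mono)
      show "set_integrable lborel D (\<lambda>x. norm (w x * G x))"
        using set_integrable_abs'[OF jw] by simp
      show "set_integrable lborel D (\<lambda>x. M * \<bar>w x\<bar>)" using aw by (rule set_integrable_mult_right)
      fix x show "norm (w x * G x) \<le> M * \<bar>w x\<bar>"
        using mult_left_mono[OF bG[of x], of "\<bar>w x\<bar>"] by (simp add: abs_mult mult.commute)
    qed
    also have "\<dots> = M * L1_norm D w" unfolding L1_norm_def by (rule set_integral_mult_right)
    finally show ?thesis .
  qed
  have "\<bar>LINT x:D|lborel. F x * \<psi> x\<bar> \<le> \<bar>LINT x:D|lborel. w12 x * G1 x\<bar> + \<bar>LINT x:D|lborel. w21 x * G2 x\<bar>"
    unfolding eq by (rule abs_triangle_ineq)
  also have "\<dots> \<le> M * L1_norm D w12 + M * L1_norm D w21"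
    by (intro add_mono bnd i12 i21 j12 j21 bG1 bG2)
  finally show ?thesis by (simp add: w12_def w21_def distrib_left)
qed





definition gg :: "real \<Rightarrow> real" where "gg y = (if y < 1 then y else 0)"

lemma geo: "y \<ge> 0 \<Longrightarrow> (\<Sum>k<N. gg (2^k*y)) \<le> 2^N * y \<and> (\<Sum>k<N. gg (2^k*y)) \<le> 2"
proof (induction N)
  case 0 then show ?case by simp
next
  case (Suc N)
  have p: "(2::real)^(Suc N) * y = 2 * (2^N * y)" by simp
  have q: "2^N * y \<ge> 0" using Suc.prems by simp
  show ?case
  proof (cases "2^N*y < 1")
    case True
    then show ?thesis using Suc.IH[OF Suc.prems] p q by (simp add: gg_def algebra_simps)
  next
    case False
    then show ?thesis using Suc.IH[OF Suc.prems] p q by (simp add: gg_def algebra_simps)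
  qed
qed

lemma ad_gg: "\<exists>L\<ge>0. \<forall>t. \<bar>ad t\<bar> \<le> L * gg \<bar>t\<bar>"
proof -
  obtain L where L: "\<And>t. \<bar>ad t\<bar> \<le> L * \<bar>t\<bar>" using ad_lip by blast
  have "L \<ge> 0" using L[of 1] by simp
  moreover have "\<bar>ad t\<bar> \<le> L * gg \<bar>t\<bar>" for t
  proof (cases "\<bar>t\<bar> < 1")
    case True then show ?thesis using L[of t] by (simp add: gg_def)
  next
    case False then show ?thesis using ad_zero[of t] by (simp add: gg_def)
  qed
  ultimately show ?thesis by blast
qed

definition psi :: "nat \<Rightarrow> real^2 \<Rightarrow> real" where
  "psi N = sep N (\<lambda>k t. aa (2^k*t)) (\<lambda>k t. aa (2^k*t))"
definition Gx :: "nat \<Rightarrow> real^2 \<Rightarrow> real" where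
  "Gx N = sep N (\<lambda>k t. ad (2^k*t)) (\<lambda>k t. BB (2^k*t))"
definition Gy :: "nat \<Rightarrow> real^2 \<Rightarrow> real" where
  "Gy N = sep N (\<lambda>k t. BB (2^k*t)) (\<lambda>k t. ad (2^k*t))"

lemma G_bound: "\<exists>M\<ge>0. \<forall>N x. \<bar>Gx N x\<bar> \<le> M \<and> \<bar>Gy N x\<bar> \<le> M"
proof -
  obtain L where L: "L \<ge> 0" "\<And>t. \<bar>ad t\<bar> \<le> L * gg \<bar>t\<bar>" using ad_gg by blast
  obtain MB where MB: "\<And>t. \<bar>BB t\<bar> \<le> MB" using BB_bound by blast
  have MB0: "MB \<ge> 0" using MB[of 0] by simp
  have gen: "\<bar>(\<Sum>k<N. ad (2^k*y) * BB (2^k*z))\<bar> \<le> 2 * L * MB" for N y z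
  proof -
    have "\<bar>(\<Sum>k<N. ad (2^k*y) * BB (2^k*z))\<bar> \<le> (\<Sum>k<N. \<bar>ad (2^k*y) * BB (2^k*z)\<bar>)"
      by (rule sum_abs)
    also have "\<dots> \<le> (\<Sum>k<N. (L * MB) * gg (2^k * \<bar>y\<bar>))"
    proof (rule sum_mono)
      fix k
      have g0: "gg (2^k * \<bar>y\<bar>) \<ge> 0" by (simp add: gg_def)
      have e: "\<bar>(2::real)^k*y\<bar> = 2^k * \<bar>y\<bar>" by (simp add: abs_mult)
      have a1: "\<bar>ad (2^k*y)\<bar> \<le> L * gg (2^k * \<bar>y\<bar>)" using L(2)[of "2^k*y"] unfolding e .
      have a2: "\<bar>BB (2^k*z)\<bar> \<le> MB" by (rule MB)
      have a3: "0 \<le> L * gg (2^k * \<bar>y\<bar>)" using L(1) g0 by simp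
      have "\<bar>ad (2^k*y)\<bar> * \<bar>BB (2^k*z)\<bar> \<le> (L * gg (2^k * \<bar>y\<bar>)) * MB"
        by (rule mult_mono[OF a1 a2 a3 abs_ge_zero])
      moreover have "(L * gg (2^k * \<bar>y\<bar>)) * MB = (L * MB) * gg (2^k * \<bar>y\<bar>)" by simp
      ultimately show "\<bar>ad (2^k*y) * BB (2^k*z)\<bar> \<le> (L * MB) * gg (2^k * \<bar>y\<bar>)"
        by (simp only: abs_mult)
    qed
    also have "\<dots> = (L * MB) * (\<Sum>k<N. gg (2^k * \<bar>y\<bar>))" by (rule sum_distrib_left[symmetric])
    also have "\<dots> \<le> (L * MB) * 2"
    proof (rule mult_left_mono)
      show "(\<Sum>k<N. gg (2^k * \<bar>y\<bar>)) \<le> 2" using geo[of "\<bar>y\<bar>" N] by simp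
      show "0 \<le> L * MB" using L(1) MB0 by simp
    qed
    finally show ?thesis by (simp add: mult_ac)
  qed
  have "\<bar>Gx N x\<bar> \<le> 2 * L * MB" for N x
    unfolding Gx_def sep_def by (rule gen)
  moreover have "\<bar>Gy N x\<bar> \<le> 2 * L * MB" for N x
  proof -
    have "(\<Sum>k<N. BB (2^k*x$1) * ad (2^k*x$2)) = (\<Sum>k<N. ad (2^k*x$2) * BB (2^k*x$1))"
      by (simp add: mult.commute)
    then show ?thesis unfolding Gy_def sep_def using gen[where y="x$2" and z="x$1" and N=N] by simp
  qed
  moreover have "2 * L * MB \<ge> 0" using L(1) MB0 by simp
  ultimately show ?thesis by blast
qed

lemma sm1_scale: "sm1 f \<Longrightarrow> sm1 (\<lambda>t. f (c*t))"
  using sm1_affine[of f c 0] by simp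

lemma DERIV_scale:
  assumes "\<And>x. (f has_real_derivative f' x) (at x)"
  shows "((\<lambda>t. f (c*t)) has_real_derivative f' (c*t) * c) (at t)"
proof -
  have l: "((\<lambda>t. c*t) has_real_derivative c) (at t)" by (auto intro!: derivative_eq_intros)
  show ?thesis by (rule DERIV_chain2[OF assms l])
qed

lemma pd_psi_1: "pd 1 (psi N) = pd 2 (Gx N)"
proof -
  have a: "pd 1 (psi N) = sep N (\<lambda>k t. ad (2^k*t) * 2^k) (\<lambda>k t. aa (2^k*t))"
    unfolding psi_def by (rule pd_sep1) (rule DERIV_scale[OF aa_DERIV])
  have b: "pd 2 (Gx N) = sep N (\<lambda>k t. ad (2^k*t)) (\<lambda>k t. aa (2^k*t) * 2^k)"
    unfolding Gx_def by (rule pd_sep2) (rule DERIV_scale[OF BB_DERIV])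
  show ?thesis unfolding a b sep_def by (simp add: mult_ac)
qed

lemma pd_psi_2: "pd 2 (psi N) = pd 1 (Gy N)"
proof -
  have a: "pd 2 (psi N) = sep N (\<lambda>k t. aa (2^k*t)) (\<lambda>k t. ad (2^k*t) * 2^k)"
    unfolding psi_def by (rule pd_sep2) (rule DERIV_scale[OF aa_DERIV])
  have b: "pd 1 (Gy N) = sep N (\<lambda>k t. aa (2^k*t) * 2^k) (\<lambda>k t. ad (2^k*t))"
    unfolding Gy_def by (rule pd_sep1) (rule DERIV_scale[OF BB_DERIV])
  show ?thesis unfolding a b sep_def by (simp add: mult_ac)
qed

definition KK :: "(real^2) set" where "KK = cbox (vec (-1/2)) (vec (1/2))"

lemma KK_disk: "KK \<subseteq> unit_disk"
proof
  fix x :: "real^2" assume "x \<in> KK"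
  then have h: "\<bar>x$1\<bar> \<le> 1/2" "\<bar>x$2\<bar> \<le> 1/2" unfolding KK_def mem_box_cart forall_2 by auto
  have "\<bar>x$1\<bar>^2 \<le> (1/2)^2" "\<bar>x$2\<bar>^2 \<le> (1/2)^2"
    using power_mono[OF h(1) abs_ge_zero, of 2] power_mono[OF h(2) abs_ge_zero, of 2] by auto
  then have "(x$1)^2 \<le> (1/2)^2" "(x$2)^2 \<le> (1/2)^2" by simp_all
  moreover have "(1/2::real)^2 = 1/4" by (simp add: power2_eq_square)
  ultimately have "(x$1)^2 + (x$2)^2 < 1" by linarith
  then have "norm x < 1" by (simp add: norm_vec_def L2_set_def sum_2)
  then show "x \<in> unit_disk" by (simp add: unit_disk_def)
qed

lemma sep_zero:
  assumes "\<And>k t. 1/2 < \<bar>t\<bar> \<Longrightarrow> p k t = 0" "\<And>k t. 1/2 < \<bar>t\<bar> \<Longrightarrow> q k t = 0" "x \<notin> KK"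
  shows "sep N p q x = 0"
proof -
  have "1/2 < \<bar>x$1\<bar> \<or> 1/2 < \<bar>x$2\<bar>"
    using assms(3) unfolding KK_def mem_box_cart forall_2 by auto
  then show ?thesis unfolding sep_def using assms(1,2) by auto
qed

lemma scale_gt: "1/2 < \<bar>t\<bar> \<Longrightarrow> 1/2 < \<bar>(2::real)^k * t\<bar>"
proof -
  assume "1/2 < \<bar>t\<bar>"
  moreover have "\<bar>t\<bar> \<le> 2^k * \<bar>t\<bar>" using one_le_power[of "2::real" k] by (simp add: mult_le_cancel_right1)
  ultimately show ?thesis by (simp add: abs_mult)
qed

lemma test_sep:
  assumes "\<And>k. sm1 (p k)" "\<And>k. sm1 (q k)"
    "\<And>k t. 1/2 < \<bar>t\<bar> \<Longrightarrow> p k t = 0" "\<And>k t. 1/2 < \<bar>t\<bar> \<Longrightarrow> q k t = 0"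
  shows "test_fun unit_disk (sep N p q)"
  unfolding test_fun_def
proof (intro conjI exI[of _ KK])
  show "smooth (sep N p q)" by (rule smooth_sep[OF assms(1,2)])
  show "compact KK" by (simp add: KK_def)
  show "KK \<subseteq> unit_disk" by (rule KK_disk)
  show "\<forall>x. x \<notin> KK \<longrightarrow> sep N p q x = 0" using sep_zero[where p=p and q=q, OF assms(3,4)] by blast
qed

lemma aa_sc: "1/2 < \<bar>t\<bar> \<Longrightarrow> aa (2^k*t) = 0" by (rule aa_zero[OF scale_gt])
lemma ad_sc: "1/2 < \<bar>t\<bar> \<Longrightarrow> ad (2^k*t) = 0" by (rule ad_zero[OF scale_gt])
lemma BB_sc: "1/2 < \<bar>t\<bar> \<Longrightarrow> BB (2^k*t) = 0" using BB_zero scale_gt[of t k] by simp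

lemma test_psi: "test_fun unit_disk (psi N)"
  unfolding psi_def by (rule test_sep) (auto intro: sm1_scale[OF sm1_aa] aa_sc)
lemma test_Gx: "test_fun unit_disk (Gx N)"
  unfolding Gx_def
  by (rule test_sep) (auto intro: sm1_scale[OF sm1_ad] sm1_scale[OF sm1_BB] ad_sc BB_sc)
lemma test_Gy: "test_fun unit_disk (Gy N)"
  unfolding Gy_def
  by (rule test_sep) (auto intro: sm1_scale[OF sm1_ad] sm1_scale[OF sm1_BB] ad_sc BB_sc)


lemma psi_lower:
  assumes d: "d > 0" "\<forall>t. \<bar>t\<bar> \<le> d \<longrightarrow> aa t \<ge> aa 0 / 2"
    and x: "\<bar>x$1\<bar> \<le> d / 2^N" "\<bar>x$2\<bar> \<le> d / 2^N"
  shows "psi N x \<ge> real N * (aa 0 / 2)^2"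
proof -
  have pos: "aa 0 / 2 > 0" using aa0 by simp
  have sc: "\<bar>(2::real)^k * s\<bar> \<le> d" if "k < N" "\<bar>s\<bar> \<le> d / 2^N" for k s
  proof -
    have "(2::real)^k \<le> 2^N" using that(1) by (intro power_increasing) auto
    have "\<bar>(2::real)^k * s\<bar> = 2^k * \<bar>s\<bar>" by (simp add: abs_mult)
    also have "\<dots> \<le> 2^k * (d / 2^N)" using that(2) by (intro mult_left_mono) auto
    also have "\<dots> \<le> 2^N * (d / 2^N)" using \<open>(2::real)^k \<le> 2^N\<close> d(1) by (intro mult_right_mono) auto
    also have "\<dots> = d" by simp
    finally show ?thesis .
  qed
  have "(\<Sum>k<N. (aa 0 / 2)^2) \<le> (\<Sum>k<N. aa (2^k * x$1) * aa (2^k * x$2))"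
  proof (rule sum_mono)
    fix k assume "k \<in> {..<N}"
    then have k: "k < N" by simp
    have a1: "aa (2^k * x$1) \<ge> aa 0 / 2" using d(2) sc[OF k x(1)] by blast
    have a2: "aa (2^k * x$2) \<ge> aa 0 / 2" using d(2) sc[OF k x(2)] by blast
    have "(aa 0 / 2) * (aa 0 / 2) \<le> aa (2^k * x$1) * aa (2^k * x$2)"
      by (rule mult_mono[OF a1 a2]) (use pos a1 in auto)
    then show "(aa 0 / 2)^2 \<le> aa (2^k * x$1) * aa (2^k * x$2)" by (simp add: power2_eq_square)
  qed
  then show ?thesis by (simp add: psi_def sep_def)
qed

definition Sb :: "real \<Rightarrow> (real^2) set" where "Sb r = cbox (vec (-r)) (vec r)"
definition Tb :: "real \<Rightarrow> (real^2) set" where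
  "Tb r = cbox (\<chi> i. if i = 1 then 3/4 - r else -r) (\<chi> i. if i = 1 then 3/4 + r else r)"

lemma Sb_mem: "x \<in> Sb r \<longleftrightarrow> \<bar>x$1\<bar> \<le> r \<and> \<bar>x$2\<bar> \<le> r"
  unfolding Sb_def mem_box_cart forall_2 by auto

lemma Tb_mem: "x \<in> Tb r \<longleftrightarrow> 3/4 - r \<le> x$1 \<and> x$1 \<le> 3/4 + r \<and> \<bar>x$2\<bar> \<le> r"
  unfolding Tb_def mem_box_cart forall_2 using two_ne by auto

lemma Sb_measure: "r \<ge> 0 \<Longrightarrow> measure lborel (Sb r) = (2*r) * (2*r)"
proof -
  assume r: "r \<ge> 0"
  have "cbox (vec (-r)) (vec r :: real^2) \<noteq> {}" using r by (auto simp: mem_box_cart intro!: exI[of _ "vec 0"])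
  then show ?thesis unfolding Sb_def using two_ne by (simp add: content_cbox_cart UNIV_2)
qed

lemma Tb_measure: "r \<ge> 0 \<Longrightarrow> measure lborel (Tb r) = (2*r) * (2*r)"
proof -
  assume r: "r \<ge> 0"
  have "(\<chi> i. if i = 1 then 3/4 - r else -r) \<in> Tb r" using r unfolding Tb_mem using two_ne by simp
  then have "Tb r \<noteq> {}" by blast
  then show ?thesis unfolding Tb_def using two_ne by (simp add: content_cbox_cart UNIV_2)
qed

lemma disk_mem: "(x$1)^2 + (x$2)^2 < 1 \<Longrightarrow> x \<in> unit_disk"
  by (simp add: unit_disk_def norm_vec_def L2_set_def sum_2)

lemma Sb_disk: "0 \<le> r \<Longrightarrow> r \<le> 1/8 \<Longrightarrow> Sb r \<subseteq> unit_disk"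
proof
  fix x assume r: "0 \<le> r" "r \<le> 1/8" and "x \<in> Sb r"
  then have h: "\<bar>x$1\<bar> \<le> 1/8" "\<bar>x$2\<bar> \<le> 1/8" unfolding Sb_mem by auto
  have "\<bar>x$1\<bar>^2 \<le> (1/8)^2" "\<bar>x$2\<bar>^2 \<le> (1/8)^2"
    using power_mono[OF h(1) abs_ge_zero, of 2] power_mono[OF h(2) abs_ge_zero, of 2] by auto
  moreover have "(1/8::real)^2 = 1/64" by (simp add: power2_eq_square)
  ultimately have "(x$1)^2 + (x$2)^2 < 1" by simp
  then show "x \<in> unit_disk" by (rule disk_mem)
qed

lemma Tb_disk: "0 \<le> r \<Longrightarrow> r \<le> 1/8 \<Longrightarrow> Tb r \<subseteq> unit_disk"
proof
  fix x assume r: "0 \<le> r" "r \<le> 1/8" and "x \<in> Tb r"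
  then have h: "\<bar>x$1\<bar> \<le> 7/8" "\<bar>x$2\<bar> \<le> 1/8" unfolding Tb_mem by auto
  have "\<bar>x$1\<bar>^2 \<le> (7/8)^2" "\<bar>x$2\<bar>^2 \<le> (1/8)^2"
    using power_mono[OF h(1) abs_ge_zero, of 2] power_mono[OF h(2) abs_ge_zero, of 2] by auto
  moreover have "(1/8::real)^2 = 1/64" "(7/8::real)^2 = 49/64" by (simp_all add: power2_eq_square)
  ultimately have "(x$1)^2 + (x$2)^2 < 1" by simp
  then show "x \<in> unit_disk" by (rule disk_mem)
qed

lemma Tb_psi: "r \<le> 1/8 \<Longrightarrow> x \<in> Tb r \<Longrightarrow> psi N x = 0"
proof -
  assume "r \<le> 1/8" "x \<in> Tb r"
  then have "x$1 > 1/2" unfolding Tb_mem by auto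
  then have "x \<notin> KK" unfolding KK_def mem_box_cart forall_2 by auto
  then show ?thesis unfolding psi_def by (rule sep_zero[rotated 2]) (auto intro: aa_sc)
qed

lemma L1_nonneg: "L1_norm D g \<ge> 0"
  unfolding L1_norm_def set_lebesgue_integral_def by (rule integral_nonneg_AE) (auto simp: indicator_def)

lemma W11_norm_ge: "L1_norm D (wpd D v i) \<le> W11_norm D v"
proof -
  have "W11_norm D v = L1_norm D v + (L1_norm D (wpd D v 1) + L1_norm D (wpd D v 2))"
    unfolding W11_norm_def by (simp add: sum_2)
  moreover have "i = 1 \<or> i = 2" by (rule exhaust_2)
  ultimately show ?thesis using L1_nonneg[of D v] L1_nonneg[of D "wpd D v 1"] L1_nonneg[of D "wpd D v 2"]
    by auto
qed


theorem mainTheorem1: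
  shows "\<not> (\<exists>C::real. \<forall>f. set_integrable lborel unit_disk f \<longrightarrow>
     (\<exists>u :: real^2 \<Rightarrow> real^2.
        (\<forall>j. W11_0 unit_disk (\<lambda>x. u x $ j)) \<and>
        (AE x in lborel. x \<in> unit_disk \<longrightarrow>
           (\<Sum>j\<in>UNIV. wpd unit_disk (\<lambda>y. u y $ j) j x) = f x - mean_value unit_disk f) \<and>
        (\<Sum>j\<in>UNIV. W11_norm unit_disk (\<lambda>x. u x $ j)) \<le> C * L1_norm unit_disk f))"
proof
  assume "\<exists>C::real. \<forall>f. set_integrable lborel unit_disk f \<longrightarrow>
     (\<exists>u :: real^2 \<Rightarrow> real^2.
        (\<forall>j. W11_0 unit_disk (\<lambda>x. u x $ j)) \<and>
        (AE x in lborel. x \<in> unit_disk \<longrightarrow>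
           (\<Sum>j\<in>UNIV. wpd unit_disk (\<lambda>y. u y $ j) j x) = f x - mean_value unit_disk f) \<and>
        (\<Sum>j\<in>UNIV. W11_norm unit_disk (\<lambda>x. u x $ j)) \<le> C * L1_norm unit_disk f)"
  then obtain C :: real where HC: "\<And>f. set_integrable lborel unit_disk f \<Longrightarrow>
     (\<exists>u :: real^2 \<Rightarrow> real^2.
        (\<forall>j. W11_0 unit_disk (\<lambda>x. u x $ j)) \<and>
        (AE x in lborel. x \<in> unit_disk \<longrightarrow>
           (\<Sum>j\<in>UNIV. wpd unit_disk (\<lambda>y. u y $ j) j x) = f x - mean_value unit_disk f) \<and>
        (\<Sum>j\<in>UNIV. W11_norm unit_disk (\<lambda>x. u x $ j)) \<le> C * L1_norm unit_disk f)"
    by blast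
  define D where "D = unit_disk"
  obtain M where M: "M \<ge> 0" "\<And>N x. \<bar>Gx N x\<bar> \<le> M" "\<And>N x. \<bar>Gy N x\<bar> \<le> M" using G_bound by blast
  obtain d where d: "d > 0" "\<forall>t. \<bar>t\<bar> \<le> d \<longrightarrow> aa t \<ge> aa 0 / 2" using aa_near0 by blast
  define c0 where "c0 = (aa 0 / 2)^2"
  have c0: "c0 > 0" using aa0 by (simp add: c0_def)
  define C' where "C' = max C 0"
  have C': "C' \<ge> 0" "C \<le> C'" by (auto simp: C'_def)
  obtain N :: nat where N: "2 * M * C' < real N * c0" using ex_less_of_nat_mult[OF c0] by blast
  define r where "r = min (1/8) (d / 2^N)"
  have "d / 2^N > 0" using d(1) by simp
  then have r: "r > 0" "r \<le> 1/8" "r \<le> d / 2^N" unfolding r_def by linarith+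
  define S where "S = Sb r"
  define T where "T = Tb r"
  have SD: "S \<subseteq> D" and TD: "T \<subseteq> D" using Sb_disk Tb_disk r by (auto simp: S_def T_def D_def)
  have Ssets: "S \<in> sets lborel" and Tsets: "T \<in> sets lborel" by (simp_all add: S_def T_def Sb_def Tb_def)
  have Sfin: "emeasure lborel S < \<infinity>" and Tfin: "emeasure lborel T < \<infinity>"
    unfolding S_def T_def Sb_def Tb_def by (rule emeasure_lborel_cbox_finite)+
  have mS: "measure lborel S = (2*r)*(2*r)" and mT: "measure lborel T = (2*r)*(2*r)"
    using Sb_measure Tb_measure r by (auto simp: S_def T_def)
  have mSpos: "measure lborel S > 0" using mS r by simp
  have iS: "integrable lborel (indicator S :: real^2 \<Rightarrow> real)"
    using Ssets Sfin by (simp add: integrable_indicator_iff)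
  have iT: "integrable lborel (indicator T :: real^2 \<Rightarrow> real)"
    using Tsets Tfin by (simp add: integrable_indicator_iff)
  define f :: "real^2 \<Rightarrow> real" where "f = (\<lambda>x. indicator S x - indicator T x)"
  have fD: "(\<lambda>x. indicator D x *\<^sub>R f x) = f"
  proof
    fix x show "indicator D x *\<^sub>R f x = f x"
      using SD TD by (cases "x \<in> D") (auto simp: f_def indicator_def)
  qed
  have fint: "set_integrable lborel D f"
    unfolding set_integrable_def fD unfolding f_def by (intro Bochner_Integration.integrable_diff iS iT)
  obtain u :: "real^2 \<Rightarrow> real^2" where
    u1: "\<forall>j. W11_0 D (\<lambda>x. u x $ j)" and
    u2: "AE x in lborel. x \<in> D \<longrightarrow>
           (\<Sum>j\<in>UNIV. wpd D (\<lambda>y. u y $ j) j x) = f x - mean_value D f" and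
    u3: "(\<Sum>j\<in>UNIV. W11_norm D (\<lambda>x. u x $ j)) \<le> C * L1_norm D f"
    using HC[OF fint[unfolded D_def]] unfolding D_def by blast
  have mean: "mean_value D f = 0"
  proof -
    have "(LINT x:D|lborel. f x) = integral\<^sup>L lborel f"
      unfolding set_lebesgue_integral_def fD ..
    also have "\<dots> = measure lborel S - measure lborel T"
      unfolding f_def by (simp add: Bochner_Integration.integral_diff[OF iS iT])
    also have "\<dots> = 0" using mS mT by simp
    finally show ?thesis by (simp add: mean_value_def)
  qed
  have L1f: "L1_norm D f \<le> 2 * measure lborel S"
  proof -
    have "L1_norm D f = integral\<^sup>L lborel (\<lambda>x. indicator D x *\<^sub>R \<bar>f x\<bar>)"
      unfolding L1_norm_def set_lebesgue_integral_def ..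
    also have "\<dots> \<le> integral\<^sup>L lborel (\<lambda>x. indicator S x + indicator T x)"
    proof (rule Bochner_Integration.integral_mono)
      show "integrable lborel (\<lambda>x. indicator D x *\<^sub>R \<bar>f x\<bar>)"
        using set_integrable_abs'[OF fint] unfolding set_integrable_def .
      show "integrable lborel (\<lambda>x. indicator S x + indicator T x :: real)" by (intro Bochner_Integration.integrable_add iS iT)
      fix x show "indicator D x *\<^sub>R \<bar>f x\<bar> \<le> indicator S x + indicator T x"
        by (auto simp: f_def indicator_def)
    qed
    also have "\<dots> = measure lborel S + measure lborel T" by (simp add: Bochner_Integration.integral_add[OF iS iT])
    finally show ?thesis using mS mT by simp
  qed
  define u1' where "u1' = (\<lambda>x. u x $ 1)"
  define u2' where "u2' = (\<lambda>x. u x $ 2)"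
  have W1: "W11 D u1'" and W2: "W11 D u2'" using u1 unfolding W11_0_def u1'_def u2'_def by auto
  have AE': "AE x in lborel. x \<in> D \<longrightarrow> wpd D u1' 1 x + wpd D u2' 2 x = f x"
    using u2 unfolding mean by (simp add: sum_2 u1'_def u2'_def)
  have core_app: "\<bar>LINT x:D|lborel. f x * psi N x\<bar> \<le> M * (L1_norm D (wpd D u1' 2) + L1_norm D (wpd D u2' 1))"
    by (rule core[OF W1 W2 _ _ _ pd_psi_1 pd_psi_2 M(2) M(3) fint AE'])
       (auto simp: D_def intro: test_psi test_Gx test_Gy)
  have upper: "L1_norm D (wpd D u1' 2) + L1_norm D (wpd D u2' 1) \<le> C' * (2 * measure lborel S)"
  proof -
    have "L1_norm D (wpd D u1' 2) + L1_norm D (wpd D u2' 1) \<le> W11_norm D u1' + W11_norm D u2'"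
      by (intro add_mono W11_norm_ge)
    also have "\<dots> = (\<Sum>j\<in>UNIV. W11_norm D (\<lambda>x. u x $ j))" by (simp add: sum_2 u1'_def u2'_def)
    also have "\<dots> \<le> C * L1_norm D f" by (rule u3)
    also have "\<dots> \<le> C' * L1_norm D f" by (rule mult_right_mono[OF C'(2) L1_nonneg])
    also have "\<dots> \<le> C' * (2 * measure lborel S)" by (rule mult_left_mono[OF L1f C'(1)])
    finally show ?thesis .
  qed
  have lower: "real N * c0 * measure lborel S \<le> (LINT x:D|lborel. f x * psi N x)"
  proof -
    have eqi: "(\<lambda>x. indicator D x *\<^sub>R (f x * psi N x)) = (\<lambda>x. indicator S x * psi N x)"
    proof
      fix x
      show "indicator D x *\<^sub>R (f x * psi N x) = indicator S x * psi N x"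
      proof (cases "x \<in> T")
        case True then show ?thesis using Tb_psi[OF r(2)] by (simp add: T_def)
      next
        case False then show ?thesis using SD by (auto simp: f_def indicator_def)
      qed
    qed
    obtain B where B: "\<And>x. \<bar>psi N x\<bar> \<le> B" using test_fun_bdd[OF test_psi] by blast
    have one: "set_integrable lborel S (\<lambda>x. 1::real)"
      unfolding set_integrable_def using iS by simp
    have iSpsi: "integrable lborel (\<lambda>x. indicator S x * psi N x)"
      using set_int_mult_bdd[OF one test_fun_cont[OF test_psi] B] unfolding set_integrable_def by simp
    have "real N * c0 * measure lborel S = integral\<^sup>L lborel (\<lambda>x. indicator S x * (real N * c0))"
      by (simp add: integral_mult_left_zero)
    also have "\<dots> \<le> integral\<^sup>L lborel (\<lambda>x. indicator S x * psi N x)"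
    proof (rule Bochner_Integration.integral_mono)
      show "integrable lborel (\<lambda>x. indicator S x * (real N * c0))" using iS by simp
      show "integrable lborel (\<lambda>x. indicator S x * psi N x)" by (rule iSpsi)
      fix x
      show "indicator S x * (real N * c0) \<le> indicator S x * psi N x"
      proof (cases "x \<in> S")
        case True
        then have "\<bar>x$1\<bar> \<le> d / 2^N" "\<bar>x$2\<bar> \<le> d / 2^N" using r(3) unfolding S_def Sb_mem by auto
        then have "psi N x \<ge> real N * c0" using psi_lower[OF d] by (simp add: c0_def)
        then show ?thesis using True by simp
      qed simp
    qed
    also have "\<dots> = (LINT x:D|lborel. f x * psi N x)" unfolding set_lebesgue_integral_def eqi ..
    finally show ?thesis .
  qed
  have "real N * c0 * measure lborel S \<le> M * (C' * (2 * measure lborel S))"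
    using lower core_app upper M(1) by (meson abs_ge_self mult_left_mono order_trans)
  then have "real N * c0 * measure lborel S \<le> (2 * M * C') * measure lborel S" by (simp add: mult_ac)
  then have "real N * c0 \<le> 2 * M * C'" using mSpos by simp
  then show False using N by simp
qed

end
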